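(* $\mathcal{R}_{MS}\subset\mathbb{C}_-=\{z\in\mathbb{C}:\Re(z)<0\}$. Equivalently, for every $z\in\mathbb{C}$ with $\Re(z)\ge0$, $\mathbb{E}\,\bigl|1+\frac{z}{1-z\tau_1}\bigr|^2\ge1$ (the expectation possibly being $+\infty$).
   Context: Let $\tau_1,\tau_2,\ldots$ be independent random variables uniformly distributed on $[0,1]$. Applying either of the randomized implicit RK2 schemes (S1) or (S2) with step $h>0$ to Dahlquist's test equation $z'(t)=\lambda z(t)$, $z(0)=1$, $\lambda\in\mathbb{C}$, gives, with $z=\lambda h$, $V^k=\prod_{j=1}^k\bigl(1+\frac{z}{1-z\tau_j}\bigr)$, $k\ge0$ (almost surely well defined). The mean-square stability region is $\mathcal{R}_{MS}=\{z\in\mathbb{C}: V^k\to0 \text{ in } L^2(\Omega)\text{ as } k\to\infty\}$; equivalently $\mathcal{R}_{MS}=\{z\in\mathbb{C}: \mathbb{E}\,|1+\frac{z}{1-z\tau_1}|^2<1\}$. *)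

theory Defs
  imports "HOL-Probability.Probability"
begin

text \<open>Amplification factor of one step of the randomized RK2 scheme applied to
  Dahlquist's test equation, for z = lambda h and random node tau.\<close>
definition amp :: "complex \<Rightarrow> real \<Rightarrow> complex" where
  "amp z t = 1 + z / (1 - z * complex_of_real t)"

definition second_moment :: "complex \<Rightarrow> ennreal" where
  "second_moment z = (\<integral>\<^sup>+ t. ennreal ((cmod (amp z t))\<^sup>2) \<partial>(uniform_measure lborel {0..1::real}))"

definition R_MS :: "complex set" where
  "R_MS = {z. second_moment z < 1}"

end

theory Submission
  imports Defs
begin

lemma sq_ge: fixes w :: complex assumes "Re w \<ge> 0"
  shows "(cmod (1 - w))\<^sup>2 \<le> (cmod (1 + w))\<^sup>2"
  using assms unfolding cmod_power2 by (simp add: power2_eq_square algebra_simps)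

lemma pt: fixes z :: complex and t :: real
  assumes a: "Re z \<ge> 0" and t: "0 \<le> t" "t \<le> 1"
    and u: "1 - z * complex_of_real t \<noteq> 0" and v: "1 - z * complex_of_real (1 - t) \<noteq> 0"
  shows "(cmod (amp z t))\<^sup>2 + (cmod (amp z (1 - t)))\<^sup>2 \<ge> 2"
proof -
  define A where "A = (cmod (1 + z * complex_of_real (1 - t)))\<^sup>2"
  define B where "B = (cmod (1 + z * complex_of_real t))\<^sup>2"
  define U where "U = (cmod (1 - z * complex_of_real t))\<^sup>2"
  define V where "V = (cmod (1 - z * complex_of_real (1 - t)))\<^sup>2"
  have e1: "amp z t = (1 + z * complex_of_real (1 - t)) / (1 - z * complex_of_real t)"
    using u unfolding amp_def by (simp add: field_simps)
  have e2: "amp z (1 - t) = (1 + z * complex_of_real t) / (1 - z * complex_of_real (1 - t))"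
    using v unfolding amp_def by (simp add: field_simps)
  have U0: "U > 0" using u by (simp add: U_def)
  have V0: "V > 0" using v by (simp add: V_def)
  have AV: "V \<le> A" unfolding A_def V_def by (rule sq_ge) (use a t in simp)
  have BU: "U \<le> B" unfolding B_def U_def by (rule sq_ge) (use a t in simp)
  have "(cmod (amp z t))\<^sup>2 = A / U" by (simp add: e1 A_def U_def norm_divide power_divide)
  moreover have "(cmod (amp z (1-t)))\<^sup>2 = B / V" by (simp add: e2 B_def V_def norm_divide power_divide)
  moreover have "A / U + B / V \<ge> V / U + U / V"
    using AV BU U0 V0 by (simp add: add_mono divide_right_mono)
  moreover have "V / U + U / V \<ge> 2"
  proof -
    have "(V - U)\<^sup>2 \<ge> 0" by simp
    hence "2 * (U*V) \<le> V*V + U*U" by (simp add: power2_eq_square algebra_simps)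
    thus ?thesis using U0 V0 by (simp add: field_simps)
  qed
  ultimately show ?thesis by linarith
qed

lemma meas: "(\<lambda>t. ennreal ((cmod (amp z t))\<^sup>2)) \<in> borel_measurable borel"
  unfolding amp_def by measurable

lemma one_pt: "\<exists>c. {t::real. 1 - z * complex_of_real t = 0} \<subseteq> {c}"
proof (cases "\<exists>t0. 1 - z * complex_of_real t0 = 0")
  case True
  then obtain t0 where h: "1 - z * complex_of_real t0 = 0" by blast
  show ?thesis
  proof (rule exI[of _ t0], safe)
    fix t assume "1 - z * complex_of_real t = 0"
    with h have "z * (complex_of_real t - complex_of_real t0) = 0" by (simp add: algebra_simps)
    moreover have "z \<noteq> 0" using h by auto
    ultimately show "t = t0" by simp
  qed
qed auto

lemma sm_ge: assumes a: "Re z \<ge> 0" shows "second_moment z \<ge> 1"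
proof -
  define g where "g = (\<lambda>t. ennreal ((cmod (amp z t))\<^sup>2))"
  have gm[measurable]: "g \<in> borel_measurable borel" unfolding g_def by (rule meas)
  define I where "I = (\<integral>\<^sup>+ t. g t * indicator {0..1::real} t \<partial>lborel)"
  have sm: "second_moment z = I"
    unfolding second_moment_def I_def g_def[symmetric]
    by (subst nn_integral_uniform_measure) (auto simp: divide_ennreal_def)
  have "I = ennreal \<bar>-1\<bar> * (\<integral>\<^sup>+ t. g (1 + (-1) * t) * indicator {0..1::real} (1 + (-1) * t) \<partial>lborel)"
    unfolding I_def by (rule nn_integral_real_affine) auto
  also have "\<dots> = (\<integral>\<^sup>+ t. g (1 - t) * indicator {0..1::real} t \<partial>lborel)"
    by (simp, intro nn_integral_cong) (auto simp: indicator_def)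
  finally have I2: "I = (\<integral>\<^sup>+ t. g (1 - t) * indicator {0..1::real} t \<partial>lborel)" .
  obtain c1 where c1: "{t::real. 1 - z * complex_of_real t = 0} \<subseteq> {c1}" using one_pt by blast
  obtain c2 where c2: "{t::real. 1 - z * complex_of_real t = 0} \<subseteq> {c2}" using one_pt by blast
  have ae: "AE t in lborel. 2 * indicator {0..1::real} t \<le> (g t * indicator {0..1::real} t + g (1 - t) * indicator {0..1::real} t)"
  proof (rule AE_I'[of "{c1, 1 - c1}"])
    show "{c1, 1 - c1} \<in> null_sets lborel" by (rule finite_imp_null_set_lborel) auto
  next
    show "{x \<in> space lborel. \<not> (2 * indicator {0..1::real} x \<le> g x * indicator {0..1::real} x + g (1 - x) * indicator {0..1::real} x)} \<subseteq> {c1, 1 - c1}"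
    proof (intro subsetI)
      fix t :: real
      assume h: "t \<in> {x \<in> space lborel. \<not> (2 * indicator {0..1::real} x \<le> g x * indicator {0..1::real} x + g (1 - x) * indicator {0..1::real} x)}"
      hence n: "\<not> (2 * indicator {0..1::real} t \<le> g t * indicator {0..1::real} t + g (1 - t) * indicator {0..1::real} t)" by simp
      show "t \<in> {c1, 1 - c1}"
      proof (rule ccontr)
        assume "t \<notin> {c1, 1 - c1}"
        hence ne: "t \<noteq> 1 - c1" and "t \<noteq> c1" by auto
        from \<open>t \<noteq> c1\<close> have u: "1 - z * complex_of_real t \<noteq> 0" using c1 by auto
        have v: "1 - z * complex_of_real (1 - t) \<noteq> 0" proof
          assume "1 - z * complex_of_real (1 - t) = 0"
          hence "1 - t \<in> {t. 1 - z * complex_of_real t = 0}" by simp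
          hence "1 - t \<in> {c1}" using c1 by (rule subsetD[rotated])
          with ne show False by simp
        qed
        show False
        proof (cases "t \<in> {0..1}")
          case True
          have "2 \<le> (cmod (amp z t))\<^sup>2 + (cmod (amp z (1 - t)))\<^sup>2"
            using pt[OF a _ _ u v] True by auto
          hence "ennreal 2 \<le> g t + g (1 - t)" unfolding g_def
            by (simp add: ennreal_plus[symmetric] del: ennreal_plus)
          with n True show False by simp
        next
          case False with n show False by simp
        qed
      qed
    qed
  qed
  have "(\<integral>\<^sup>+ t. 2 * indicator {0..1::real} t \<partial>lborel) \<le> (\<integral>\<^sup>+ t. (g t * indicator {0..1::real} t + g (1 - t) * indicator {0..1::real} t) \<partial>lborel)"
    by (rule nn_integral_mono_AE[OF ae])
  also have "\<dots> = I + I"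
    unfolding I_def by (subst nn_integral_add) (auto simp: I2[unfolded I_def])
  finally have "2 \<le> I + I" by (simp add: nn_integral_cmult)
  hence "2 \<le> 2 * I" by (simp add: mult_2)
  hence "2 * 1 \<le> 2 * I" by simp
  hence "1 \<le> I" using ennreal_mult_le_mult_iff[of "2::ennreal" 1 I] by simp
  thus ?thesis using sm by simp
qed

theorem fact2:
  shows "R_MS \<subseteq> {z. Re z < 0}"
proof
  fix z assume "z \<in> R_MS"
  hence "second_moment z < 1" by (simp add: R_MS_def)
  thus "z \<in> {z. Re z < 0}" using sm_ge[of z] by (cases "Re z < 0") auto
qed

end
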